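(* Let $G$ be a graph, $X\subseteq V(G)$ with $F:=G-X$ a pseudoforest, and $k$ an integer. Assume that: (1) there is no $v\in X$ with $\mathrm{Conf}_F(\{v\})\ge |X|$; (2) there are no distinct non-adjacent $u,v\in X$ with $\mathrm{Conf}_F(\{u,v\})\ge|X|$; (3) for all distinct $u,v,w\in X$ such that $\{u,v,w\}$ is independent in $G$ and $\mathrm{Conf}_F(\{u,v,w\})\ge|X|$, there is an anchor triangle $P$ with $N_G(V(P))=\{u,v,w\}$. Let $P$ be a connected component of $F$ which is not a non-redundant anchor triangle and such that $\mathrm{Conf}_P(X')=0$ for every chunk $X'$. Then $G$ has an independent set of size at least $k$ if and only if $G-V(P)$ has an independent set of size at least $k-\alpha(P)$.
   Context: All graphs are finite, simple and undirected; a pseudoforest is a graph each of whose connected components contains at most one cycle. $\alpha(H)$ is the independence number of $H$. For a subgraph $F'\subseteq F$ and $X'\subseteq X$, $\mathrm{Conf}_{F'}(X') := \alpha(F') - \alpha(F' - N_G(X'))$, where $N_G(S)$ is the set of vertices outside $S$ adjacent to some vertex of $S$. A chunk is a set $X'\subseteq X$ that is independent in $G$, satisfies $1\le |X'|\le 3$, and has $\mathrm{Conf}_F(X') < |X|$. An anchor triangle is a connected component $P$ of $F$ with $V(P)=\{p_1,p_2,p_3\}$ such that there are vertices $x_1,x_2,x_3\in X$ with $N_G(p_1)=\{p_2,p_3,x_1\}$, $N_G(p_2)=\{p_1,p_3,x_2\}$, $N_G(p_3)=\{p_1,p_2,x_3\}$; it is non-redundant if no other anchor triangle has the same open neighborhood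 in $G$. *)

theory Defs
  imports Main
begin

(* All subgraphs occurring in the statement are induced subgraphs, represented
   by their vertex sets (edges = E restricted to that set). *)
definition graph :: "'a set \<Rightarrow> ('a \<Rightarrow> 'a \<Rightarrow> bool) \<Rightarrow> bool" where
  "graph V E \<longleftrightarrow> finite V \<and> (\<forall>x y. E x y \<longrightarrow> E y x) \<and> (\<forall>x. \<not> E x x)
     \<and> (\<forall>x y. E x y \<longrightarrow> x \<in> V \<and> y \<in> V)"

definition indep :: "('a \<Rightarrow> 'a \<Rightarrow> bool) \<Rightarrow> 'a set \<Rightarrow> bool" where
  "indep E I \<longleftrightarrow> (\<forall>x\<in>I. \<forall>y\<in>I. \<not> E x y)"

definition alpha :: "('a \<Rightarrow> 'a \<Rightarrow> bool) \<Rightarrow> 'a set \<Rightarrow> nat" where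
  "alpha E S = Max {card I | I. I \<subseteq> S \<and> indep E I}"

definition nbh :: "'a set \<Rightarrow> ('a \<Rightarrow> 'a \<Rightarrow> bool) \<Rightarrow> 'a set \<Rightarrow> 'a set" where
  "nbh V E S = {y \<in> V - S. \<exists>x\<in>S. E x y}"

definition conf :: "'a set \<Rightarrow> ('a \<Rightarrow> 'a \<Rightarrow> bool) \<Rightarrow> 'a set \<Rightarrow> 'a set \<Rightarrow> nat" where
  "conf V E F' X' = alpha E F' - alpha E (F' - nbh V E X')"

definition component :: "('a \<Rightarrow> 'a \<Rightarrow> bool) \<Rightarrow> 'a set \<Rightarrow> 'a set \<Rightarrow> bool" where
  "component E S C \<longleftrightarrow>
     (\<exists>x\<in>S. C = {y. (\<lambda>a b. a \<in> S \<and> b \<in> S \<and> E a b)\<^sup>*\<^sup>* x y})"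

definition is_cycle :: "('a \<Rightarrow> 'a \<Rightarrow> bool) \<Rightarrow> 'a set \<Rightarrow> 'a list \<Rightarrow> bool" where
  "is_cycle E S cs \<longleftrightarrow> length cs \<ge> 3 \<and> distinct cs \<and> set cs \<subseteq> S \<and>
     (\<forall>i < length cs. E (cs ! i) (cs ! ((i + 1) mod length cs)))"

(* the cycle as a subgraph is determined by its edge set *)
definition cycle_edges :: "'a list \<Rightarrow> 'a set set" where
  "cycle_edges cs = {{cs ! i, cs ! ((i + 1) mod length cs)} | i. i < length cs}"

definition pseudoforest :: "('a \<Rightarrow> 'a \<Rightarrow> bool) \<Rightarrow> 'a set \<Rightarrow> bool" where
  "pseudoforest E S \<longleftrightarrow> (\<forall>C. component E S C \<longrightarrow>
     (\<forall>c1 c2. is_cycle E C c1 \<and> is_cycle E C c2 \<longrightarrow> cycle_edges c1 = cycle_edges c2))"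

definition chunk :: "'a set \<Rightarrow> ('a \<Rightarrow> 'a \<Rightarrow> bool) \<Rightarrow> 'a set \<Rightarrow> 'a set \<Rightarrow> bool" where
  "chunk V E X X' \<longleftrightarrow> X' \<subseteq> X \<and> indep E X' \<and> 1 \<le> card X' \<and> card X' \<le> 3 \<and>
     conf V E (V - X) X' < card X"

definition anchor_triangle :: "'a set \<Rightarrow> ('a \<Rightarrow> 'a \<Rightarrow> bool) \<Rightarrow> 'a set \<Rightarrow> 'a set \<Rightarrow> bool" where
  "anchor_triangle V E X P \<longleftrightarrow> component E (V - X) P \<and>
     (\<exists>p1 p2 p3 x1 x2 x3. P = {p1, p2, p3} \<and> distinct [p1, p2, p3] \<and>
        x1 \<in> X \<and> x2 \<in> X \<and> x3 \<in> X \<and>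
        nbh V E {p1} = {p2, p3, x1} \<and> nbh V E {p2} = {p1, p3, x2} \<and>
        nbh V E {p3} = {p1, p2, x3})"

definition nonredundant_anchor_triangle :: "'a set \<Rightarrow> ('a \<Rightarrow> 'a \<Rightarrow> bool) \<Rightarrow> 'a set \<Rightarrow> 'a set \<Rightarrow> bool" where
  "nonredundant_anchor_triangle V E X P \<longleftrightarrow> anchor_triangle V E X P \<and>
     (\<forall>P'. anchor_triangle V E X P' \<and> P' \<noteq> P \<longrightarrow> nbh V E P' \<noteq> nbh V E P)"

end

theory Submission
  imports Defs
begin


definition maxset :: "('a \<Rightarrow> 'a \<Rightarrow> bool) \<Rightarrow> 'a set \<Rightarrow> 'a set \<Rightarrow> bool" where
  "maxset E S M \<longleftrightarrow> M \<subseteq> S \<and> indep E M \<and> card M = alpha E S"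

lemma alpha_set_fin:
  assumes "finite S" shows "finite {card I | I. I \<subseteq> S \<and> indep E I}"
proof -
  have "{card I | I. I \<subseteq> S \<and> indep E I} \<subseteq> card ` Pow S" by auto
  thus ?thesis using assms finite_subset by blast
qed

lemma alpha_ge:
  assumes "finite S" "I \<subseteq> S" "indep E I" shows "card I \<le> alpha E S"
  unfolding alpha_def using alpha_set_fin[OF assms(1)] assms by (intro Max_ge) auto

lemma alpha_ex:
  assumes "finite S" shows "\<exists>I. I \<subseteq> S \<and> indep E I \<and> card I = alpha E S"
proof -
  have "card {} \<in> {card I | I. I \<subseteq> S \<and> indep E I}" by (auto simp: indep_def intro!: exI[of _ "{}"])
  hence ne: "{card I | I. I \<subseteq> S \<and> indep E I} \<noteq> {}" by blast
  have "alpha E S \<in> {card I | I. I \<subseteq> S \<and> indep E I}"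
    unfolding alpha_def using alpha_set_fin[OF assms] ne by (rule Max_in)
  thus ?thesis by auto
qed

lemma indep_subset: "indep E I \<Longrightarrow> J \<subseteq> I \<Longrightarrow> indep E J"
  unfolding indep_def by blast

lemma alpha_mono:
  assumes "finite T" "S \<subseteq> T" shows "alpha E S \<le> alpha E T"
proof -
  obtain I where "I \<subseteq> S" "indep E I" "card I = alpha E S"
    using alpha_ex[OF finite_subset[OF assms(2,1)]] by blast
  thus ?thesis using alpha_ge[OF assms(1), of I E] assms(2) by auto
qed

lemma alpha_geI:
  assumes "finite S" "I \<subseteq> S" "indep E I" "n \<le> card I" shows "n \<le> alpha E S"
  using alpha_ge[OF assms(1-3)] assms(4) by linarith

lemma alpha_ex_ge:
  assumes "finite S" "n \<le> alpha E S" shows "\<exists>I. I \<subseteq> S \<and> indep E I \<and> n \<le> card I"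
  using alpha_ex[OF assms(1), of E] assms(2) by auto

definition mt :: "'a set \<Rightarrow> 'a set \<Rightarrow> 'a set \<Rightarrow> 'a set" where
  "mt A N N' = (N \<inter> N' \<inter> A) \<union> ((N \<union> N') - A)"
definition jn :: "'a set \<Rightarrow> 'a set \<Rightarrow> 'a set \<Rightarrow> 'a set" where
  "jn A N N' = ((N \<union> N') \<inter> A) \<union> ((N \<inter> N') - A)"

definition bip :: "('a \<Rightarrow> 'a \<Rightarrow> bool) \<Rightarrow> 'a set \<Rightarrow> 'a set \<Rightarrow> bool" where
  "bip E S A \<longleftrightarrow> (\<forall>x\<in>S. \<forall>y\<in>S. E x y \<longrightarrow> (x \<in> A \<longleftrightarrow> y \<notin> A))"

lemma bip_subset: "bip E S A \<Longrightarrow> T \<subseteq> S \<Longrightarrow> bip E T A"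
  unfolding bip_def by blast

lemma mt_jn_card:
  assumes "finite N" "finite N'"
  shows "card (mt A N N') + card (jn A N N') = card N + card N'"
proof -
  have u: "mt A N N' \<union> jn A N N' = N \<union> N'" and i: "mt A N N' \<inter> jn A N N' = N \<inter> N'"
    unfolding mt_def jn_def by auto
  have f: "finite (mt A N N')" "finite (jn A N N')"
    using assms unfolding mt_def jn_def by auto
  have "card (mt A N N') + card (jn A N N') = card (N \<union> N') + card (N \<inter> N')"
    using card_Un_Int[OF f] u i by simp
  also have "\<dots> = card N + card N'" using card_Un_Int[OF assms] by simp
  finally show ?thesis .
qed

lemma mt_sub: "N \<subseteq> S \<Longrightarrow> N' \<subseteq> S \<Longrightarrow> mt A N N' \<subseteq> S" unfolding mt_def by auto
lemma jn_sub: "N \<subseteq> S \<Longrightarrow> N' \<subseteq> S \<Longrightarrow> jn A N N' \<subseteq> S" unfolding jn_def by auto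

lemma mt_indep:
  assumes "bip E S A" "N \<subseteq> S" "N' \<subseteq> S" "indep E N" "indep E N'"
  shows "indep E (mt A N N')"
  using assms unfolding indep_def bip_def mt_def by (metis (full_types) DiffE Int_iff Un_iff subsetD)

lemma jn_indep:
  assumes "bip E S A" "N \<subseteq> S" "N' \<subseteq> S" "indep E N" "indep E N'"
  shows "indep E (jn A N N')"
  using assms unfolding indep_def bip_def jn_def by (metis (full_types) DiffE Int_iff Un_iff subsetD)

lemma maxset_closed:
  assumes "finite S" "bip E S A" "maxset E S N" "maxset E S N'"
  shows "maxset E S (mt A N N') \<and> maxset E S (jn A N N')"
proof -
  have s: "N \<subseteq> S" "N' \<subseteq> S" "indep E N" "indep E N'" using assms(3,4) unfolding maxset_def by auto
  have fN: "finite N" "finite N'" using s assms(1) finite_subset by auto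
  have a: "card (mt A N N') \<le> alpha E S"
    by (rule alpha_ge[OF assms(1) mt_sub[OF s(1,2)] mt_indep[OF assms(2) s]])
  have b: "card (jn A N N') \<le> alpha E S"
    by (rule alpha_ge[OF assms(1) jn_sub[OF s(1,2)] jn_indep[OF assms(2) s]])
  have c: "card N = alpha E S" "card N' = alpha E S" using assms(3,4) unfolding maxset_def by auto
  have "card (mt A N N') = alpha E S" "card (jn A N N') = alpha E S"
    using mt_jn_card[OF fN, of A] a b c by linarith+
  thus ?thesis unfolding maxset_def
    using mt_sub[OF s(1,2)] jn_sub[OF s(1,2)] mt_indep[OF assms(2) s] jn_indep[OF assms(2) s] by auto
qed

lemma step1:
  assumes cl: "\<forall>N\<in>F. \<forall>N'\<in>F. mt A N N' \<in> F"
    and "finite G" "G \<subseteq> A" "\<exists>N\<in>F. N \<inter> Z = {}" "\<forall>a\<in>G. \<exists>N\<in>F. N \<inter> insert a Z = {}"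
  shows "\<exists>N\<in>F. N \<inter> (G \<union> Z) = {}"
  using assms(2-5)
proof (induction G rule: finite_induct)
  case empty thus ?case by simp
next
  case (insert a G)
  obtain N1 where N1: "N1 \<in> F" "N1 \<inter> (G \<union> Z) = {}" using insert by auto
  obtain N2 where N2: "N2 \<in> F" "N2 \<inter> insert a Z = {}" using insert by auto
  have "mt A N1 N2 \<in> F" using cl N1 N2 by auto
  moreover have "mt A N1 N2 \<inter> (insert a G \<union> Z) = {}"
    using N1 N2 insert.prems(1) unfolding mt_def by auto
  ultimately show ?case by blast
qed

lemma step2:
  assumes cl: "\<forall>N\<in>F. \<forall>N'\<in>F. jn A N N' \<in> F"
    and "finite G" "G \<inter> A = {}" "\<exists>N\<in>F. N \<inter> Z = {}" "\<forall>a\<in>G. \<exists>N\<in>F. N \<inter> insert a Z = {}"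
  shows "\<exists>N\<in>F. N \<inter> (G \<union> Z) = {}"
  using assms(2-5)
proof (induction G rule: finite_induct)
  case empty thus ?case by simp
next
  case (insert a G)
  obtain N1 where N1: "N1 \<in> F" "N1 \<inter> (G \<union> Z) = {}" using insert by auto
  obtain N2 where N2: "N2 \<in> F" "N2 \<inter> insert a Z = {}" using insert by auto
  have "jn A N1 N2 \<in> F" using cl N1 N2 by auto
  moreover have "jn A N1 N2 \<inter> (insert a G \<union> Z) = {}"
    using N1 N2 insert.prems(1) unfolding jn_def by auto
  ultimately show ?case by blast
qed

lemma card_le2: "card {a, b} \<le> 2" by (simp add: card_insert_if)

lemma helly_abs:
  assumes clm: "\<forall>N\<in>F. \<forall>N'\<in>F. mt A N N' \<in> F" and clj: "\<forall>N\<in>F. \<forall>N'\<in>F. jn A N N' \<in> F"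
    and fD: "finite D" and h: "\<forall>Q\<subseteq>D. card Q \<le> 2 \<longrightarrow> (\<exists>N\<in>F. N \<inter> Q = {})"
  shows "\<exists>N\<in>F. N \<inter> D = {}"
proof -
  have h0: "\<exists>N\<in>F. N \<inter> {} = {}" using h by auto
  have hb: "\<forall>b\<in>D - A. \<exists>N\<in>F. N \<inter> insert b (D \<inter> A) = {}"
  proof
    fix b assume b: "b \<in> D - A"
    have "\<exists>N\<in>F. N \<inter> (D \<inter> A \<union> {b}) = {}"
    proof (rule step1[OF clm])
      have "{b} \<subseteq> D" "card {b} \<le> 2" using b by auto
      thus "\<exists>N\<in>F. N \<inter> {b} = {}" using h by blast
      show "\<forall>a\<in>D \<inter> A. \<exists>N\<in>F. N \<inter> insert a {b} = {}"
      proof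
        fix a assume "a \<in> D \<inter> A"
        hence "{a, b} \<subseteq> D" using b by auto
        from h[rule_format, OF this card_le2] have "\<exists>N\<in>F. N \<inter> {a, b} = {}" .
        thus "\<exists>N\<in>F. N \<inter> insert a {b} = {}" by simp
      qed
    qed (use fD in auto)
    thus "\<exists>N\<in>F. N \<inter> insert b (D \<inter> A) = {}" by (simp add: Un_commute)
  qed
  have hA: "\<exists>N\<in>F. N \<inter> (D \<inter> A) = {}"
  proof -
    have "\<exists>N\<in>F. N \<inter> (D \<inter> A \<union> {}) = {}"
    proof (rule step1[OF clm])
      show "\<forall>a\<in>D \<inter> A. \<exists>N\<in>F. N \<inter> insert a {} = {}"
      proof
        fix a assume "a \<in> D \<inter> A"
        hence "{a} \<subseteq> D" by auto
        moreover have "card {a} \<le> 2" by simp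
        ultimately show "\<exists>N\<in>F. N \<inter> insert a {} = {}" using h by blast
      qed
    qed (use fD h0 in auto)
    thus ?thesis by simp
  qed
  have "\<exists>N\<in>F. N \<inter> ((D - A) \<union> (D \<inter> A)) = {}"
    by (rule step2[OF clj]) (use fD hA hb in auto)
  moreover have "(D - A) \<union> (D \<inter> A) = D" by auto
  ultimately show ?thesis by simp
qed

lemma helly2_bip:
  assumes fS: "finite S" and b: "bip E S A" and lt: "alpha E (S - D) < alpha E S"
  shows "\<exists>Q\<subseteq>D. finite Q \<and> card Q \<le> 2 \<and> alpha E (S - Q) < alpha E S"
proof (rule ccontr)
  assume na: "\<not> ?thesis"
  let ?F = "{M. maxset E S M}"
  have clm: "\<forall>N\<in>?F. \<forall>N'\<in>?F. mt A N N' \<in> ?F" and clj: "\<forall>N\<in>?F. \<forall>N'\<in>?F. jn A N N' \<in> ?F"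
    using maxset_closed[OF fS b] by auto
  have h: "\<forall>Q\<subseteq>D \<inter> S. card Q \<le> 2 \<longrightarrow> (\<exists>N\<in>?F. N \<inter> Q = {})"
  proof (intro allI impI)
    fix Q assume Q: "Q \<subseteq> D \<inter> S" "card Q \<le> 2"
    have fQ: "finite Q" using Q fS finite_subset by blast
    have "\<not> alpha E (S - Q) < alpha E S" using na Q fQ by auto
    then obtain I where I: "I \<subseteq> S - Q" "indep E I" "alpha E S \<le> card I"
      using alpha_ex_ge[of "S - Q" "alpha E S" E] fS by auto
    have "card I \<le> alpha E S" using alpha_ge[OF fS, of I E] I by auto
    hence "maxset E S I" using I unfolding maxset_def by auto
    thus "\<exists>N\<in>?F. N \<inter> Q = {}" using I by auto
  qed
  obtain M where M: "maxset E S M" "M \<inter> (D \<inter> S) = {}"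
    using helly_abs[OF clm clj _ h] fS by auto
  have "M \<subseteq> S - D" using M unfolding maxset_def by auto
  hence "card M \<le> alpha E (S - D)" using alpha_ge[of "S - D" M E] fS M unfolding maxset_def by auto
  thus False using M lt unfolding maxset_def by auto
qed



definition ispath :: "('a \<Rightarrow> 'a \<Rightarrow> bool) \<Rightarrow> 'a set \<Rightarrow> 'a list \<Rightarrow> bool" where
  "ispath E S xs \<longleftrightarrow> xs \<noteq> [] \<and> distinct xs \<and> set xs \<subseteq> S \<and>
     (\<forall>i. Suc i < length xs \<longrightarrow> E (xs ! i) (xs ! Suc i))"

lemma ispath_len: "finite S \<Longrightarrow> ispath E S xs \<Longrightarrow> length xs \<le> card S"
  unfolding ispath_def by (metis card_mono distinct_card)

lemma is_cycle_mono: "is_cycle E S cs \<Longrightarrow> S \<subseteq> T \<Longrightarrow> is_cycle E T cs"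
  unfolding is_cycle_def by auto

lemma leaf_exists:
  assumes fS: "finite S" and ne: "S \<noteq> {}" and sym: "\<forall>x y. E x y \<longrightarrow> E y x"
    and irr: "\<forall>x. \<not> E x x" and nc: "\<not> (\<exists>cs. is_cycle E S cs)"
  shows "\<exists>v\<in>S. \<forall>y\<in>S. \<forall>z\<in>S. E v y \<longrightarrow> E v z \<longrightarrow> y = z"
proof -
  obtain v0 where v0: "v0 \<in> S" using ne by auto
  have "ispath E S [v0]" unfolding ispath_def using v0 by auto
  then obtain xs where xs: "ispath E S xs"
    and mx: "\<forall>ys. ispath E S ys \<longrightarrow> card S - length xs \<le> card S - length ys"
    using ex_has_least_nat[of "ispath E S" "[v0]" "\<lambda>ys. card S - length ys"] by blast
  obtain v ys where xsv: "xs = v # ys" using xs unfolding ispath_def by (cases xs) auto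
  have vS: "v \<in> S" using xs xsv unfolding ispath_def by auto
  show ?thesis
  proof (rule bexI[OF _ vS], intro ballI impI, rule ccontr)
    fix y z assume yz: "y \<in> S" "z \<in> S" "E v y" "E v z" "y \<noteq> z"
    obtain w where w: "w \<in> S" "E v w" "ys = [] \<or> w \<noteq> hd ys"
      using yz by metis
    show False
    proof (cases "w \<in> set xs")
      case False
      have "ispath E S (w # xs)"
        using xs False w sym unfolding ispath_def
        apply (auto simp: xsv)
        subgoal for i by (cases i) auto
        done
      hence "card S - length xs \<le> card S - length (w # xs)" using mx by blast
      moreover have "length (w # xs) \<le> card S" using ispath_len[OF fS \<open>ispath E S (w # xs)\<close>] .
      ultimately show False by simp
    next
      case True
      then obtain j where j: "j < length xs" "xs ! j = w" by (metis in_set_conv_nth)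
      have "j \<noteq> 0"
      proof
        assume "j = 0" hence "w = v" using j xsv by simp
        thus False using w irr by auto
      qed
      moreover have "j \<noteq> 1"
      proof
        assume "j = 1"
        thus False using j w xsv by (cases ys) auto
      qed
      ultimately have j2: "2 \<le> j" by linarith
      let ?cs = "take (Suc j) xs"
      have "is_cycle E S ?cs"
        unfolding is_cycle_def
      proof (intro conjI allI impI)
        show "3 \<le> length ?cs" using j j2 by simp
        show "distinct ?cs" using xs unfolding ispath_def by auto
        show "set ?cs \<subseteq> S" using xs unfolding ispath_def by (meson order_trans set_take_subset)
        fix i assume i: "i < length ?cs"
        hence ij: "i \<le> j" using j by simp
        show "E (?cs ! i) (?cs ! ((i + 1) mod length ?cs))"
        proof (cases "i = j")
          case True
          have "length ?cs = Suc j" using j by simp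
          hence "(i + 1) mod length ?cs = 0" using True by simp
          moreover have "?cs ! i = w" using True j by simp
          moreover have "?cs ! 0 = v" using xsv by simp
          ultimately show ?thesis using w sym by simp
        next
          case False
          have "length ?cs = Suc j" using j by simp
          hence "(i + 1) mod length ?cs = Suc i" using False ij by simp
          thus ?thesis using False ij j xs unfolding ispath_def by simp
        qed
      qed
      thus False using nc by blast
    qed
  qed
qed

lemma acyclic_bip:
  assumes "finite S" and sym: "\<forall>x y. E x y \<longrightarrow> E y x"
    and irr: "\<forall>x. \<not> E x x" and "\<not> (\<exists>cs. is_cycle E S cs)"
  shows "\<exists>A. bip E S A"
  using assms(1,4)
proof (induction S rule: finite_psubset_induct)
  case (psubset S)
  show ?case
  proof (cases "S = {}")
    case True thus ?thesis unfolding bip_def by auto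
  next
    case False
    obtain v where v: "v \<in> S" "\<forall>y\<in>S. \<forall>z\<in>S. E v y \<longrightarrow> E v z \<longrightarrow> y = z"
      using leaf_exists[OF psubset.hyps False sym irr psubset.prems] by blast
    have "\<not> (\<exists>cs. is_cycle E (S - {v}) cs)"
      using psubset.prems is_cycle_mono[of E "S - {v}" _ S] by blast
    then obtain A' where A': "bip E (S - {v}) A'"
      using psubset.IH[of "S - {v}"] v by auto
    define A where "A = (if (\<exists>w\<in>S. E v w \<and> w \<notin> A') then insert v A' else A' - {v})"
    have "bip E S A"
      unfolding bip_def
    proof (intro ballI impI)
      fix x y assume xy: "x \<in> S" "y \<in> S" "E x y"
      show "x \<in> A \<longleftrightarrow> y \<notin> A"
      proof (cases "x = v")
        case True
        hence "y \<noteq> v" using xy irr by auto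
        thus ?thesis using True xy v unfolding A_def by auto
      next
        case xv: False
        show ?thesis
        proof (cases "y = v")
          case True
          have "E v x" using xy True sym by auto
          thus ?thesis using True xy v xv unfolding A_def by auto
        next
          case False
          thus ?thesis using A' xy xv unfolding bip_def A_def by auto
        qed
      qed
    qed
    thus ?thesis by blast
  qed
qed



locale edgerm =
  fixes E E' :: "'a \<Rightarrow> 'a \<Rightarrow> bool" and c1 c2 :: 'a
  assumes E'E: "\<And>x y. E' x y \<Longrightarrow> E x y"
    and EE': "\<And>x y. E x y \<Longrightarrow> E' x y \<or> (x = c1 \<and> y = c2) \<or> (x = c2 \<and> y = c1)"
    and Ec: "E c1 c2"
begin

lemma indep_EE': "indep E M \<Longrightarrow> indep E' M"
  unfolding indep_def using E'E by blast

lemma indep_E'E: "indep E' M \<Longrightarrow> \<not> (c1 \<in> M \<and> c2 \<in> M) \<Longrightarrow> indep E M"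
  unfolding indep_def using EE' by blast

lemma indep_E_not_both: "indep E M \<Longrightarrow> \<not> (c1 \<in> M \<and> c2 \<in> M)"
  unfolding indep_def using Ec by blast

lemma alpha_le': "finite T \<Longrightarrow> alpha E T \<le> alpha E' T"
proof -
  assume f: "finite T"
  obtain I where I: "I \<subseteq> T" "indep E I" "card I = alpha E T" using alpha_ex[OF f, of E] by blast
  show ?thesis using alpha_ge[OF f I(1) indep_EE'[OF I(2)]] I(3) by simp
qed

lemma card_rm1: "finite M \<Longrightarrow> card M \<le> card (M - {x}) + 1"
  by (cases "x \<in> M") (auto simp: card_Diff_singleton_if)

lemma eq_lemma:
  assumes fS: "finite S" and b: "bip E' S A" and eq: "alpha E' S = alpha E S"
    and lt: "alpha E (S - D) < alpha E S"
  shows "\<exists>Q\<subseteq>D. finite Q \<and> card Q \<le> 2 \<and> alpha E (S - Q) < alpha E S"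
proof -
  have blk: "alpha E' (S - insert c D) < alpha E' S" if c: "c = c1 \<or> c = c2" for c
  proof (rule ccontr)
    assume "\<not> ?thesis"
    then obtain M where M: "M \<subseteq> S - insert c D" "indep E' M" "alpha E' S \<le> card M"
      using alpha_ex_ge[of "S - insert c D" "alpha E' S" E'] fS by auto
    have "indep E M" using indep_E'E[OF M(2)] M(1) c by auto
    hence "card M \<le> alpha E (S - D)" using alpha_ge[of "S - D" M E] M(1) fS by auto
    thus False using M eq lt by linarith
  qed
  obtain Q1 where Q1: "Q1 \<subseteq> insert c1 D" "finite Q1" "card Q1 \<le> 2" "alpha E' (S - Q1) < alpha E' S"
    using helly2_bip[OF fS b blk[of c1]] by auto
  obtain Q2 where Q2: "Q2 \<subseteq> insert c2 D" "finite Q2" "card Q2 \<le> 2" "alpha E' (S - Q2) < alpha E' S"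
    using helly2_bip[OF fS b blk[of c2]] by auto
  show ?thesis
  proof (cases "c1 \<in> Q1")
    case False
    have "alpha E (S - Q1) \<le> alpha E' (S - Q1)" using alpha_le' fS by auto
    thus ?thesis using Q1 False eq by (intro exI[of _ Q1]) auto
  next
    case c1Q: True
    show ?thesis
    proof (cases "c2 \<in> Q2")
      case False
      have "alpha E (S - Q2) \<le> alpha E' (S - Q2)" using alpha_le' fS by auto
      thus ?thesis using Q2 False eq by (intro exI[of _ Q2]) auto
    next
      case c2Q: True
      define R where "R = (Q1 - {c1}) \<union> (Q2 - {c2})"
      have RD: "R \<subseteq> D" using Q1 Q2 unfolding R_def by auto
      have fR: "finite R" using Q1 Q2 unfolding R_def by auto
      have "card (Q1 - {c1}) \<le> 1" using Q1 c1Q by (simp add: card_Diff_singleton)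
      moreover have "card (Q2 - {c2}) \<le> 1" using Q2 c2Q by (simp add: card_Diff_singleton)
      ultimately have cR: "card R \<le> 2" unfolding R_def using card_Un_le[of "Q1 - {c1}" "Q2 - {c2}"] by linarith
      have "alpha E (S - R) < alpha E S"
      proof (rule ccontr)
        assume "\<not> ?thesis"
        then obtain N where N: "N \<subseteq> S - R" "indep E N" "alpha E S \<le> card N"
          using alpha_ex_ge[of "S - R" "alpha E S" E] fS by auto
        have nb: "\<not> (c1 \<in> N \<and> c2 \<in> N)" using indep_E_not_both[OF N(2)] .
        have iN: "indep E' N" using indep_EE'[OF N(2)] .
        show False
        proof (cases "c1 \<in> N")
          case False
          hence "N \<subseteq> S - Q1" using N(1) unfolding R_def by auto
          hence "card N \<le> alpha E' (S - Q1)" using alpha_ge[of "S - Q1" N E'] iN fS by auto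
          thus False using N Q1 eq by linarith
        next
          case True
          hence "c2 \<notin> N" using nb by auto
          hence "N \<subseteq> S - Q2" using N(1) unfolding R_def by auto
          hence "card N \<le> alpha E' (S - Q2)" using alpha_ge[of "S - Q2" N E'] iN fS by auto
          thus False using N Q2 eq by linarith
        qed
      qed
      thus ?thesis using RD fR cR by blast
    qed
  qed
qed

lemma odd_case:
  assumes fP: "finite P" and b: "bip E' P A" and cA: "c1 \<in> A" "c2 \<in> A"
    and lt: "alpha E (P - D) < alpha E P"
  shows "\<exists>Q\<subseteq>D. finite Q \<and> card Q \<le> 3 \<and> alpha E (P - Q) < alpha E P"
proof -
  let ?a = "alpha E P" and ?a' = "alpha E' P"
  have le: "?a \<le> ?a'" using alpha_le' fP by auto
  show ?thesis
  proof (cases "?a' = ?a")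
    case True
    then obtain Q where "Q \<subseteq> D" "finite Q" "card Q \<le> 2" "alpha E (P - Q) < alpha E P"
      using eq_lemma[OF fP b _ lt] by blast
    thus ?thesis by (intro exI[of _ Q]) auto
  next
    case False
    hence gt: "?a < ?a'" using le by linarith
    have le1: "?a' \<le> ?a + 1"
    proof -
      obtain M where M: "M \<subseteq> P" "indep E' M" "card M = ?a'" using alpha_ex[OF fP] by blast
      have "indep E' (M - {c1})" using indep_subset[OF M(2), of "M - {c1}"] by blast
      hence "indep E (M - {c1})" using indep_E'E[of "M - {c1}"] by blast
      hence "card (M - {c1}) \<le> ?a" using alpha_ge[OF fP, of "M - {c1}" E] M by auto
      moreover have "card M \<le> card (M - {c1}) + 1"
        by (rule card_rm1[OF finite_subset[OF M(1) fP]])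
      ultimately show ?thesis using M by linarith
    qed
    have blk: "alpha E' (P - D) < ?a'"
    proof (rule ccontr)
      assume "\<not> ?thesis"
      then obtain M where M: "M \<subseteq> P - D" "indep E' M" "?a' \<le> card M"
        using alpha_ex_ge[of "P - D" ?a' E'] fP by auto
      have "indep E' (M - {c1})" using indep_subset[OF M(2), of "M - {c1}"] by blast
      hence "indep E (M - {c1})" using indep_E'E[of "M - {c1}"] by blast
      moreover have "M - {c1} \<subseteq> P - D" using M(1) by blast
      ultimately have "card (M - {c1}) \<le> alpha E (P - D)" using alpha_ge[of "P - D" "M - {c1}" E] fP by blast
      moreover have "card M \<le> card (M - {c1}) + 1"
        using M(1) fP by (intro card_rm1) (auto intro: finite_subset)
      ultimately show False using M gt lt by linarith
    qed
    obtain Q where Q: "Q \<subseteq> D" "finite Q" "card Q \<le> 2" "alpha E' (P - Q) < ?a'"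
      using helly2_bip[OF fP b blk] by auto
    show ?thesis
    proof (cases "\<exists>a\<in>Q. a \<in> A \<and> alpha E' (P - {a}) < ?a'")
      case True
      then obtain a where a: "a \<in> Q" "a \<in> A" "alpha E' (P - {a}) < ?a'" by blast
      have aD: "a \<in> D" using a Q by auto
      show ?thesis
      proof (cases "alpha E (P - {a}) < ?a")
        case True
        thus ?thesis using aD by (intro exI[of _ "{a}"]) auto
      next
        case False
        have m: "alpha E (P - {a}) \<le> ?a" by (rule alpha_mono[OF fP]) blast
        hence e1: "alpha E (P - {a}) = ?a" using False by linarith
        have "alpha E (P - {a}) \<le> alpha E' (P - {a})" using alpha_le' fP by auto
        hence e2: "alpha E' (P - {a}) = alpha E (P - {a})" using a(3) le1 e1 by linarith
        have fPa: "finite (P - {a})" using fP by auto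
        have "alpha E ((P - {a}) - D) \<le> alpha E (P - D)"
          using alpha_mono[of "P - D" "(P - {a}) - D" E] fP by auto
        hence lt2: "alpha E ((P - {a}) - D) < alpha E (P - {a})" using lt e1 by linarith
        obtain Q0 where Q0: "Q0 \<subseteq> D" "finite Q0" "card Q0 \<le> 2" "alpha E (P - {a} - Q0) < alpha E (P - {a})"
          using eq_lemma[OF fPa bip_subset[OF b] e2 lt2] by auto
        have "P - insert a Q0 = P - {a} - Q0" by auto
        moreover have "card (insert a Q0) \<le> 3" using Q0 card_insert_le[of Q0 a] by (simp add: card_insert_if)
        ultimately show ?thesis using Q0 aD e1 by (intro exI[of _ "insert a Q0"]) auto
      qed
    next
      case False
      have av: "\<forall>a\<in>Q \<inter> A. \<exists>M\<in>{M. maxset E' P M}. M \<inter> insert a {} = {}"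
      proof
        fix a assume a: "a \<in> Q \<inter> A"
        hence "?a' \<le> alpha E' (P - {a})" using False by auto
        then obtain M where M: "M \<subseteq> P - {a}" "indep E' M" "?a' \<le> card M"
          using alpha_ex_ge[of "P - {a}" ?a' E'] fP by auto
        have "card M \<le> ?a'" using alpha_ge[OF fP, of M E'] M by auto
        hence "maxset E' P M" using M unfolding maxset_def by auto
        thus "\<exists>M\<in>{M. maxset E' P M}. M \<inter> insert a {} = {}" using M by auto
      qed
      have ex0: "\<exists>M\<in>{M. maxset E' P M}. M \<inter> {} = {}"
        using alpha_ex[OF fP, of E'] unfolding maxset_def by auto
      obtain M0 where M0: "maxset E' P M0" "M0 \<inter> (Q \<inter> A \<union> {}) = {}"
        using step1[of "{M. maxset E' P M}" A "Q \<inter> A" "{}"] maxset_closed[OF fP b] Q(2) av ex0 by auto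
      have "alpha E (P - Q) < ?a"
      proof (rule ccontr)
        assume "\<not> ?thesis"
        then obtain N where N: "N \<subseteq> P - Q" "indep E N" "?a \<le> card N"
          using alpha_ex_ge[of "P - Q" ?a E] fP by auto
        have M0s: "M0 \<subseteq> P" "indep E' M0" "card M0 = ?a'" using M0 unfolding maxset_def by auto
        have Ns: "N \<subseteq> P" using N by auto
        have iN: "indep E' N" using indep_EE'[OF N(2)] .
        have fN: "finite N" "finite M0" using Ns M0s fP finite_subset by auto
        have imt: "indep E' (mt A N M0)" using mt_indep[OF b Ns M0s(1) iN M0s(2)] .
        have "\<not> (c1 \<in> mt A N M0 \<and> c2 \<in> mt A N M0)"
          using indep_E_not_both[OF N(2)] cA unfolding mt_def by auto
        hence "indep E (mt A N M0)" using indep_E'E[OF imt] by auto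
        hence cm: "card (mt A N M0) \<le> ?a" using alpha_ge[OF fP, of "mt A N M0" E] mt_sub[OF Ns M0s(1)] by auto
        have cj: "card (jn A N M0) \<ge> ?a'" using mt_jn_card[OF fN, of A] cm N M0s by linarith
        have "jn A N M0 \<subseteq> P - Q" using N M0 Ns M0s(1) unfolding jn_def by auto
        hence "card (jn A N M0) \<le> alpha E' (P - Q)"
          using alpha_ge[of "P - Q" "jn A N M0" E'] jn_indep[OF b Ns M0s(1) iN M0s(2)] fP by auto
        thus False using cj Q by linarith
      qed
      thus ?thesis using Q by auto
    qed
  qed
qed

end



lemma bip_flip: "bip E S A \<Longrightarrow> bip E S (- A)"
  unfolding bip_def by auto

lemma SL:
  assumes fP: "finite P" and sym: "\<forall>x y. E x y \<longrightarrow> E y x" and irr: "\<forall>x. \<not> E x x"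
    and uc: "\<forall>cs cs'. is_cycle E P cs \<and> is_cycle E P cs' \<longrightarrow> cycle_edges cs = cycle_edges cs'"
    and lt: "alpha E (P - D) < alpha E P"
  shows "\<exists>Q\<subseteq>D. finite Q \<and> card Q \<le> 3 \<and> alpha E (P - Q) < alpha E P"
proof (cases "\<exists>cs. is_cycle E P cs")
  case False
  obtain A where "bip E P A" using acyclic_bip[OF fP sym irr False] by blast
  then obtain Q where "Q \<subseteq> D" "finite Q" "card Q \<le> 2" "alpha E (P - Q) < alpha E P"
    using helly2_bip[OF fP _ lt] by blast
  thus ?thesis by (intro exI[of _ Q]) auto
next
  case True
  then obtain cs where cs: "is_cycle E P cs" by blast
  define c1 where "c1 = cs ! 0"
  define c2 where "c2 = cs ! 1"
  have len: "3 \<le> length cs" "distinct cs" using cs unfolding is_cycle_def by auto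
  have l01: "0 < length cs" "1 < length cs" using len by auto
  have c12: "c1 \<noteq> c2" unfolding c1_def c2_def using nth_eq_iff_index_eq[OF len(2) l01] by simp
  have Ec: "E c1 c2" using cs len unfolding is_cycle_def c1_def c2_def
    by (metis One_nat_def Suc_le_lessD add_0 mod_less numeral_3_eq_3 Suc_lessD zero_less_Suc less_trans_Suc)
  define E' where "E' = (\<lambda>x y. E x y \<and> \<not> (x = c1 \<and> y = c2) \<and> \<not> (x = c2 \<and> y = c1))"
  interpret edgerm E E' c1 c2
    by unfold_locales (auto simp: E'_def Ec)
  have sym': "\<forall>x y. E' x y \<longrightarrow> E' y x" using sym unfolding E'_def by auto
  have irr': "\<forall>x. \<not> E' x x" using irr unfolding E'_def by auto
  have ce: "{c1, c2} \<in> cycle_edges cs"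
  proof -
    have "(0 + 1) mod length cs = 1" using l01 by simp
    hence "{cs ! 0, cs ! ((0 + 1) mod length cs)} = {c1, c2}" unfolding c1_def c2_def by simp
    moreover have "0 < length cs" using l01 by simp
    ultimately show ?thesis unfolding cycle_edges_def by blast
  qed
  have nc': "\<not> (\<exists>cs'. is_cycle E' P cs')"
  proof
    assume "\<exists>cs'. is_cycle E' P cs'"
    then obtain cs' where cs': "is_cycle E' P cs'" by blast
    have "is_cycle E P cs'" using cs' unfolding is_cycle_def E'_def by auto
    hence "cycle_edges cs' = cycle_edges cs" using uc cs by blast
    hence "{c1, c2} \<in> cycle_edges cs'" using ce by simp
    then obtain i where i: "i < length cs'" "{c1, c2} = {cs' ! i, cs' ! ((i + 1) mod length cs')}"
      unfolding cycle_edges_def by blast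
    have "E' (cs' ! i) (cs' ! ((i + 1) mod length cs'))" using cs' i unfolding is_cycle_def by blast
    thus False using i(2) unfolding E'_def doubleton_eq_iff by auto
  qed
  obtain A where A: "bip E' P A" using acyclic_bip[OF fP sym' irr' nc'] by blast
  show ?thesis
  proof (cases "(c1 \<in> A) = (c2 \<in> A)")
    case False
    have "bip E P A" unfolding bip_def
    proof (intro ballI impI)
      fix x y assume xy: "x \<in> P" "y \<in> P" "E x y"
      from EE'[OF xy(3)] show "x \<in> A \<longleftrightarrow> y \<notin> A"
        using A xy False unfolding bip_def by auto
    qed
    then obtain Q where "Q \<subseteq> D" "finite Q" "card Q \<le> 2" "alpha E (P - Q) < alpha E P"
      using helly2_bip[OF fP _ lt] by blast
    thus ?thesis by (intro exI[of _ Q]) auto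
  next
    case True
    define A0 where "A0 = (if c1 \<in> A then A else - A)"
    have b0: "bip E' P A0" using A bip_flip[OF A] unfolding A0_def by auto
    have cA: "c1 \<in> A0" "c2 \<in> A0" using True unfolding A0_def by auto
    show ?thesis using odd_case[OF fP b0 cA lt] .
  qed
qed

definition RS :: "('a \<Rightarrow> 'a \<Rightarrow> bool) \<Rightarrow> 'a set \<Rightarrow> 'a \<Rightarrow> 'a \<Rightarrow> bool" where
  "RS E S = (\<lambda>a b. a \<in> S \<and> b \<in> S \<and> E a b)"

lemma component_RS: "component E S C \<longleftrightarrow> (\<exists>x\<in>S. C = {y. (RS E S)\<^sup>*\<^sup>* x y})"
  unfolding component_def RS_def by simp

lemma RS_in: "(RS E S)\<^sup>*\<^sup>* x y \<Longrightarrow> x \<in> S \<Longrightarrow> y \<in> S"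
  by (induction rule: rtranclp_induct) (auto simp: RS_def)

lemma comp_sub: "component E S C \<Longrightarrow> C \<subseteq> S"
  unfolding component_RS using RS_in by fastforce

lemma comp_closed:
  assumes "component E S C" "y \<in> C" "z \<in> S" "E y z" shows "z \<in> C"
proof -
  obtain x where x: "x \<in> S" "C = {y. (RS E S)\<^sup>*\<^sup>* x y}" using assms(1) unfolding component_RS by blast
  have "y \<in> S" using assms comp_sub by blast
  hence "RS E S y z" using assms unfolding RS_def by auto
  thus ?thesis using assms(2) x by (auto intro: rtranclp.rtrancl_into_rtrancl)
qed

lemma RS_sym: assumes sy: "\<forall>x y. E x y \<longrightarrow> E y x" and r: "(RS E S)\<^sup>*\<^sup>* x y" shows "(RS E S)\<^sup>*\<^sup>* y x"
  using r
proof (induction rule: rtranclp_induct)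
  case base thus ?case by simp
next
  case (step y z)
  have "RS E S z y" using step sy unfolding RS_def by auto
  thus ?case using step by (meson converse_rtranclp_into_rtranclp)
qed

lemma comp_disj:
  assumes sym: "\<forall>x y. E x y \<longrightarrow> E y x" and "component E S C" "component E S C'" "w \<in> C" "w \<in> C'"
  shows "C = C'"
proof -
  obtain x where x: "x \<in> S" "C = {y. (RS E S)\<^sup>*\<^sup>* x y}" using assms(2) unfolding component_RS by blast
  obtain x' where x': "x' \<in> S" "C' = {y. (RS E S)\<^sup>*\<^sup>* x' y}" using assms(3) unfolding component_RS by blast
  have "(RS E S)\<^sup>*\<^sup>* x w" "(RS E S)\<^sup>*\<^sup>* x' w" using assms x x' by auto
  hence xx: "(RS E S)\<^sup>*\<^sup>* x x'" "(RS E S)\<^sup>*\<^sup>* x' x" using RS_sym[OF sym] by (meson rtranclp_trans)+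
  show ?thesis using x x' xx by (auto intro: rtranclp_trans)
qed

lemma nbh1_edge:
  assumes G: "graph V E" and n: "nbh V E {p} = {a, b, x}" and e: "E p y" shows "y \<in> {a, b, x}"
proof -
  have "y \<in> V" "y \<noteq> p" using G e unfolding graph_def by auto
  hence "y \<in> nbh V E {p}" using e unfolding nbh_def by auto
  thus ?thesis using n by simp
qed

lemma anchor_b:
  assumes G: "graph V E" and n: "nbh V E {p} = {a, b, x}" and "x \<notin> Q" "p \<in> Q"
  shows "x \<in> nbh V E Q \<and> E x p"
proof -
  have "x \<in> nbh V E {p}" using n by simp
  hence "E p x" "x \<in> V" unfolding nbh_def by auto
  thus ?thesis using assms G unfolding nbh_def graph_def by auto
qed

lemma anchor_facts:
  assumes G: "graph V E" and at: "anchor_triangle V E X Q"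
  shows "Q \<subseteq> V - X" "\<forall>q\<in>Q. \<exists>x\<in>nbh V E Q. E x q"
    "\<forall>u\<in>nbh V E Q. \<exists>p\<in>Q. E p u \<and> (\<forall>y. E p y \<longrightarrow> y \<in> Q \<or> y = u)"
proof -
  have cQ: "component E (V - X) Q" using at unfolding anchor_triangle_def by auto
  show QV: "Q \<subseteq> V - X" using comp_sub[OF cQ] .
  obtain p1 p2 p3 x1 x2 x3 where t: "Q = {p1, p2, p3}" "x1 \<in> X" "x2 \<in> X" "x3 \<in> X"
    "nbh V E {p1} = {p2, p3, x1}" "nbh V E {p2} = {p1, p3, x2}" "nbh V E {p3} = {p1, p2, x3}"
    using at unfolding anchor_triangle_def by blast
  have xQ: "x1 \<notin> Q" "x2 \<notin> Q" "x3 \<notin> Q" using QV t by auto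
  show "\<forall>q\<in>Q. \<exists>x\<in>nbh V E Q. E x q"
    using anchor_b[OF G t(5) xQ(1)] anchor_b[OF G t(6) xQ(2)] anchor_b[OF G t(7) xQ(3)] t(1) by blast
  show "\<forall>u\<in>nbh V E Q. \<exists>p\<in>Q. E p u \<and> (\<forall>y. E p y \<longrightarrow> y \<in> Q \<or> y = u)"
  proof
    fix u assume u: "u \<in> nbh V E Q"
    then obtain p where p: "p \<in> Q" "E p u" and uQ: "u \<notin> Q" unfolding nbh_def by auto
    have "\<forall>y. E p y \<longrightarrow> y \<in> Q \<or> y = u"
    proof (cases "p = p1")
      case True
      have "u \<in> {p2, p3, x1}" using nbh1_edge[OF G t(5)] p True by blast
      hence "u = x1" using uQ t(1) by auto
      thus ?thesis using nbh1_edge[OF G t(5)] True t(1) by blast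
    next
      case n1: False
      show ?thesis
      proof (cases "p = p2")
        case True
        have "u \<in> {p1, p3, x2}" using nbh1_edge[OF G t(6)] p True by blast
        hence "u = x2" using uQ t(1) by auto
        thus ?thesis using nbh1_edge[OF G t(6)] True t(1) by blast
      next
        case False
        hence True': "p = p3" using n1 p t(1) by auto
        have "u \<in> {p1, p2, x3}" using nbh1_edge[OF G t(7)] p True' by blast
        hence "u = x3" using uQ t(1) by auto
        thus ?thesis using nbh1_edge[OF G t(7)] True' t(1) by blast
      qed
    qed
    thus "\<exists>p\<in>Q. E p u \<and> (\<forall>y. E p y \<longrightarrow> y \<in> Q \<or> y = u)" using p by blast
  qed
qed



theorem lemma5:
  fixes V :: "'a set" and E :: "'a \<Rightarrow> 'a \<Rightarrow> bool" and X P :: "'a set" and k :: int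
  assumes G: "graph V E"
    and XV: "X \<subseteq> V"
    and pf: "pseudoforest E (V - X)"
    and c1: "\<not> (\<exists>v\<in>X. conf V E (V - X) {v} \<ge> card X)"
    and c2: "\<not> (\<exists>u\<in>X. \<exists>v\<in>X. u \<noteq> v \<and> \<not> E u v \<and> conf V E (V - X) {u, v} \<ge> card X)"
    and c3: "\<forall>u\<in>X. \<forall>v\<in>X. \<forall>w\<in>X. distinct [u, v, w] \<and> indep E {u, v, w} \<and>
               conf V E (V - X) {u, v, w} \<ge> card X \<longrightarrow>
               (\<exists>Q. anchor_triangle V E X Q \<and> nbh V E Q = {u, v, w})"
    and Pc: "component E (V - X) P"
    and Pnr: "\<not> nonredundant_anchor_triangle V E X P"
    and Pconf: "\<forall>X'. chunk V E X X' \<longrightarrow> conf V E P X' = 0"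
  shows "(\<exists>I. I \<subseteq> V \<and> indep E I \<and> int (card I) \<ge> k) \<longleftrightarrow>
         (\<exists>I. I \<subseteq> V - P \<and> indep E I \<and> int (card I) \<ge> k - int (alpha E P))"
proof -
  have fV: "finite V" and sym: "\<forall>x y. E x y \<longrightarrow> E y x" and irr: "\<forall>x. \<not> E x x"
    and EV: "\<forall>x y. E x y \<longrightarrow> x \<in> V \<and> y \<in> V" using G unfolding graph_def by auto
  have PF: "P \<subseteq> V - X" using comp_sub[OF Pc] .
  have fP: "finite P" using PF fV finite_subset by blast
  have fX: "finite X" using XV fV finite_subset by blast
  define W where "W = V - X - P"
  have fW: "finite W" unfolding W_def using fV by auto
  show ?thesis
  proof
    assume "\<exists>I. I \<subseteq> V \<and> indep E I \<and> int (card I) \<ge> k"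
    then obtain I where I: "I \<subseteq> V" "indep E I" "int (card I) \<ge> k" by blast
    have fI: "finite I" using I fV finite_subset by blast
    have "card (I \<inter> P) \<le> alpha E P" using alpha_ge[OF fP, of "I \<inter> P" E] indep_subset[OF I(2)] by blast
    moreover have "card I = card (I - P) + card (I \<inter> P)"
      using card_Int_Diff[OF fI, of P] by simp
    ultimately have "int (card (I - P)) \<ge> k - int (alpha E P)" using I(3) by linarith
    moreover have "I - P \<subseteq> V - P" using I by auto
    moreover have "indep E (I - P)" using indep_subset[OF I(2)] by blast
    ultimately show "\<exists>I. I \<subseteq> V - P \<and> indep E I \<and> int (card I) \<ge> k - int (alpha E P)" by blast
  next
    assume "\<exists>I. I \<subseteq> V - P \<and> indep E I \<and> int (card I) \<ge> k - int (alpha E P)"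
    then obtain I' where I': "I' \<subseteq> V - P" "indep E I'" "int (card I') \<ge> k - int (alpha E P)" by blast
    define g where "g S = card S + alpha E (W - nbh V E S)" for S
    define cand where "cand = {S. S \<subseteq> X \<and> indep E S}"
    have fc: "finite cand" unfolding cand_def using fX by (simp add: Collect_conj_eq finite_Collect_subsets)
    have ec: "{} \<in> cand" unfolding cand_def indep_def by auto
    define m where "m = Max (g ` cand)"
    have mi: "m \<in> g ` cand" unfolding m_def using fc ec by (intro Max_in) auto
    have gmax: "\<forall>S\<in>cand. g S \<le> m" unfolding m_def using fc by auto
    obtain T0 where T0: "T0 \<in> cand" "g T0 = m" using mi by blast
    have "\<exists>S. (S \<in> cand \<and> g S = m) \<and> (\<forall>S'. S' \<in> cand \<and> g S' = m \<longrightarrow> card S \<le> card S')"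
      by (rule ex_has_least_nat[of "\<lambda>S. S \<in> cand \<and> g S = m" T0 card]) (use T0 in simp)
    then obtain S where S: "S \<in> cand \<and> g S = m" and Smin: "\<forall>S'. S' \<in> cand \<and> g S' = m \<longrightarrow> card S \<le> card S'"
      by blast
    have SX: "S \<subseteq> X" and iS: "indep E S" using S unfolding cand_def by auto
    have fS: "finite S" using SX fX finite_subset by blast
    have uc: "\<forall>cs cs'. is_cycle E P cs \<and> is_cycle E P cs' \<longrightarrow> cycle_edges cs = cycle_edges cs'"
      using pf Pc unfolding pseudoforest_def by blast
    have key: "alpha E (P - nbh V E S) = alpha E P"
    proof (rule ccontr)
      assume ne: "alpha E (P - nbh V E S) \<noteq> alpha E P"
      have "alpha E (P - nbh V E S) \<le> alpha E P" by (rule alpha_mono[OF fP]) blast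
      hence lt: "alpha E (P - nbh V E S) < alpha E P" using ne by linarith
      obtain Q where Q: "Q \<subseteq> nbh V E S" "finite Q" "card Q \<le> 3" "alpha E (P - Q) < alpha E P"
        using SL[OF fP sym irr uc lt] by blast
      have "\<forall>q\<in>Q. \<exists>x. x \<in> S \<and> E x q" using Q(1) unfolding nbh_def by auto
      then obtain f where f: "\<forall>q\<in>Q. f q \<in> S \<and> E (f q) q" using bchoice[of Q "\<lambda>q x. x \<in> S \<and> E x q"] by blast
      define S0 where "S0 = f ` Q"
      have S0S: "S0 \<subseteq> S" using f unfolding S0_def by auto
      have S0X: "S0 \<subseteq> X" using S0S SX by auto
      have iS0: "indep E S0" using indep_subset[OF iS S0S] .
      have fS0: "finite S0" using Q(2) unfolding S0_def by auto
      have cS0: "card S0 \<le> 3" using card_image_le[OF Q(2), of f] Q(3) unfolding S0_def by linarith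
      have QS0: "Q \<subseteq> nbh V E S0"
      proof
        fix q assume q: "q \<in> Q"
        hence "q \<in> V" "q \<notin> S" using Q(1) unfolding nbh_def by auto
        hence "q \<in> V - S0" using S0S by auto
        moreover have "f q \<in> S0" "E (f q) q" using f q unfolding S0_def by auto
        ultimately show "q \<in> nbh V E S0" unfolding nbh_def by auto
      qed
      have "alpha E (P - nbh V E S0) \<le> alpha E (P - Q)"
        by (rule alpha_mono) (use fP QS0 in auto)
      hence confpos: "conf V E P S0 \<noteq> 0" using Q(4) unfolding conf_def by linarith
      have "Q \<noteq> {}" using Q(4) by auto
      hence S0ne: "S0 \<noteq> {}" unfolding S0_def by auto
      hence c1S0: "1 \<le> card S0" using fS0 by (simp add: Suc_leI card_gt_0_iff)
      have "\<not> chunk V E X S0"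
      proof
        assume "chunk V E X S0"
        hence "conf V E P S0 = 0" using Pconf by simp
        thus False using confpos by simp
      qed
      hence nch: "\<not> (conf V E (V - X) S0 < card X)"
        using S0X iS0 c1S0 cS0 unfolding chunk_def by blast
      hence confF: "card X \<le> conf V E (V - X) S0" by (simp add: not_less)
      have "card S0 = 1 \<or> card S0 = 2 \<or> card S0 = 3" using c1S0 cS0 by presburger
      moreover have "card S0 \<noteq> 1"
      proof
        assume "card S0 = 1"
        then obtain v where v: "S0 = {v}" using card_1_singleton_iff[of S0] by auto
        have "v \<in> X" using S0X v by auto
        moreover have "card X \<le> conf V E (V - X) {v}" using confF v by simp
        ultimately have "\<exists>v\<in>X. conf V E (V - X) {v} \<ge> card X" by blast
        thus False using c1 by simp
      qed
      moreover have "card S0 \<noteq> 2"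
      proof
        assume "card S0 = 2"
        then obtain u v where uv: "S0 = {u, v}" "u \<noteq> v" using card_2_iff[of S0] by auto
        have "\<not> E u v" using iS0 uv unfolding indep_def by auto
        moreover have "u \<in> X" "v \<in> X" using S0X uv by auto
        moreover have "card X \<le> conf V E (V - X) {u, v}" using confF uv by simp
        ultimately have "\<exists>u\<in>X. \<exists>v\<in>X. u \<noteq> v \<and> \<not> E u v \<and> conf V E (V - X) {u, v} \<ge> card X"
          using uv(2) by blast
        thus False using c2 by simp
      qed
      ultimately have "card S0 = 3" by blast
      then obtain u v w where uvw: "S0 = {u, v, w}" "u \<noteq> v" "v \<noteq> w" "u \<noteq> w" using card_3_iff[of S0] by auto
      have X3: "u \<in> X" "v \<in> X" "w \<in> X" using S0X uvw by auto
      have "distinct [u, v, w] \<and> indep E {u, v, w} \<and> conf V E (V - X) {u, v, w} \<ge> card X"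
        using uvw iS0 confF by simp
      hence "\<exists>Q. anchor_triangle V E X Q \<and> nbh V E Q = {u, v, w}"
        using c3 X3 by blast
      hence "\<exists>Q. anchor_triangle V E X Q \<and> nbh V E Q = S0" using uvw by simp
      then obtain Q1 where Q1: "anchor_triangle V E X Q1" "nbh V E Q1 = S0" by blast
      obtain Q' where Q': "anchor_triangle V E X Q'" "nbh V E Q' = S0" "Q' \<noteq> P"
      proof (cases "Q1 = P")
        case False thus ?thesis using that Q1 by blast
      next
        case True
        hence "anchor_triangle V E X P" using Q1 by simp
        then obtain P' where "anchor_triangle V E X P'" "P' \<noteq> P" "nbh V E P' = nbh V E P"
          using Pnr unfolding nonredundant_anchor_triangle_def by blast
        thus ?thesis using that Q1 True by auto
      qed
      have cQ': "component E (V - X) Q'" using Q'(1) unfolding anchor_triangle_def by auto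
      have Q'V: "Q' \<subseteq> V - X" using anchor_facts(1)[OF G Q'(1)] .
      have disj: "Q' \<inter> P = {}" using comp_disj[OF sym cQ' Pc] Q'(3) by blast
      obtain u where uS0: "u \<in> S0" using S0ne by blast
      have uS: "u \<in> S" using uS0 S0S by auto
      obtain p where p: "p \<in> Q'" "E p u" "\<forall>y. E p y \<longrightarrow> y \<in> Q' \<or> y = u"
        using anchor_facts(3)[OF G Q'(1)] uS0 Q'(2) by blast
      have Q'nS: "Q' \<subseteq> nbh V E S"
      proof
        fix q assume q: "q \<in> Q'"
        then obtain x where x: "x \<in> S0" "E x q" using anchor_facts(2)[OF G Q'(1)] Q'(2) by blast
        have "q \<in> V" "q \<notin> S" using q Q'V SX by auto
        thus "q \<in> nbh V E S" using x S0S unfolding nbh_def by auto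
      qed
      define S1 where "S1 = S - {u}"
      have S1c: "S1 \<in> cand" using SX iS indep_subset[OF iS] unfolding S1_def cand_def by auto
      have cS1: "card S1 < card S" using uS fS unfolding S1_def by (metis card_Diff1_less)
      obtain J where J: "J \<subseteq> W - nbh V E S" "indep E J" "card J = alpha E (W - nbh V E S)"
        using alpha_ex[of "W - nbh V E S" E] fW by auto
      have pW: "p \<in> W" using p(1) Q'V disj unfolding W_def by auto
      have pn1: "p \<notin> nbh V E S1"
      proof
        assume "p \<in> nbh V E S1"
        then obtain x where x: "x \<in> S1" "E x p" unfolding nbh_def by auto
        hence "E p x" using sym by auto
        hence "x \<in> Q' \<or> x = u" using p(3) by auto
        moreover have "x \<in> X" using x SX unfolding S1_def by auto
        ultimately show False using Q'V x unfolding S1_def by auto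
      qed
      have Jn1: "J \<subseteq> W - nbh V E S1"
      proof
        fix y assume y: "y \<in> J"
        have yW: "y \<in> W" "y \<notin> nbh V E S" using J y by auto
        have "y \<notin> nbh V E S1"
        proof
          assume "y \<in> nbh V E S1"
          then obtain x where "x \<in> S1" "E x y" "y \<in> V" unfolding nbh_def by auto
          moreover have "y \<notin> S" using yW SX unfolding W_def by auto
          ultimately have "y \<in> nbh V E S" unfolding nbh_def S1_def by auto
          thus False using yW by auto
        qed
        thus "y \<in> W - nbh V E S1" using yW by auto
      qed
      have pJ: "p \<notin> J" using J Q'nS p(1) by auto
      have iJ': "indep E (insert p J)"
        unfolding indep_def
      proof (intro ballI)
        fix x y assume xy: "x \<in> insert p J" "y \<in> insert p J"
        have np: "\<not> E p z" if z: "z \<in> J" for z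
        proof
          assume "E p z"
          hence "z \<in> Q' \<or> z = u" using p(3) by auto
          moreover have "z \<notin> Q'" using z J Q'nS by auto
          moreover have "z \<noteq> u" using z J uS SX unfolding W_def by auto
          ultimately show False by auto
        qed
        show "\<not> E x y"
        proof (cases "x = p")
          case True
          thus ?thesis using xy np irr by auto
        next
          case False
          hence xJ: "x \<in> J" using xy by auto
          show ?thesis
          proof (cases "y = p")
            case True thus ?thesis using np[OF xJ] sym by auto
          next
            case False thus ?thesis using xy xJ J(2) unfolding indep_def by auto
          qed
        qed
      qed
      have fJ: "finite J" using J fW finite_subset by blast
      have "card (insert p J) \<le> alpha E (W - nbh V E S1)"
        using alpha_ge[of "W - nbh V E S1" "insert p J" E] fW Jn1 pW pn1 iJ' by auto
      hence "card J + 1 \<le> alpha E (W - nbh V E S1)" using fJ pJ by simp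
      moreover have "card S1 + 1 = card S"
      proof -
        have "0 < card S" using uS fS card_gt_0_iff by blast
        thus ?thesis using uS fS unfolding S1_def by (simp add: card_Diff_singleton)
      qed
      ultimately have "g S \<le> g S1" unfolding g_def using J(3) by linarith
      hence "g S1 = m" using gmax S1c S by (metis le_antisym)
      hence "card S \<le> card S1" using Smin S1c by blast
      thus False using cS1 by linarith
    qed
    obtain J where J: "J \<subseteq> W - nbh V E S" "indep E J" "card J = alpha E (W - nbh V E S)"
      using alpha_ex[of "W - nbh V E S" E] fW by auto
    obtain K where K: "K \<subseteq> P - nbh V E S" "indep E K" "card K = alpha E (P - nbh V E S)"
      using alpha_ex[of "P - nbh V E S" E] fP by auto
    have fJ: "finite J" using J fW finite_subset by blast
    have fK: "finite K" using K fP finite_subset by blast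
    define I where "I = S \<union> J \<union> K"
    have JV: "J \<subseteq> V - X" "J \<inter> P = {}" using J unfolding W_def by auto
    have KV: "K \<subseteq> V - X" using K PF by auto
    have noSJK: "\<not> E x y" if "x \<in> S" "y \<in> J \<union> K" for x y
    proof
      assume e: "E x y"
      have "y \<in> V" "y \<notin> S" using that JV KV SX by auto
      hence "y \<in> nbh V E S" using e that unfolding nbh_def by auto
      thus False using that J K by auto
    qed
    have noJK: "\<not> E y z" if "y \<in> J" "z \<in> K" for y z
    proof
      assume e: "E y z"
      hence "E z y" using sym by auto
      moreover have "z \<in> P" using that K by auto
      moreover have "y \<in> V - X" using that JV by auto
      ultimately have "y \<in> P" using comp_closed[OF Pc] by blast
      thus False using that JV by auto
    qed
    have iI: "indep E I"
      unfolding indep_def I_def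
    proof (intro ballI)
      fix x y assume x: "x \<in> S \<union> J \<union> K" and y: "y \<in> S \<union> J \<union> K"
      show "\<not> E x y"
      proof (cases "x \<in> S")
        case True
        thus ?thesis using y iS noSJK unfolding indep_def by auto
      next
        case xS: False
        show ?thesis
        proof (cases "y \<in> S")
          case True
          thus ?thesis using noSJK[OF True, of x] x xS sym by blast
        next
          case yS: False
          show ?thesis
          proof (cases "x \<in> J")
            case True
            thus ?thesis using y yS J(2) noJK[OF True, of y] unfolding indep_def by auto
          next
            case False
            hence xK: "x \<in> K" using x xS by auto
            show ?thesis
            proof (cases "y \<in> J")
              case True thus ?thesis using noJK[OF True xK] sym by blast
            next
              case False thus ?thesis using y yS xK K(2) unfolding indep_def by auto
            qed
          qed
        qed
      qed
    qed
    have IV: "I \<subseteq> V" unfolding I_def using SX XV JV KV by auto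
    have d1: "S \<inter> (J \<union> K) = {}" using SX JV KV by auto
    have d2: "J \<inter> K = {}" using JV K by auto
    have cI: "card I = card S + card J + card K"
      unfolding I_def using fS fJ fK d1 d2
      by (simp add: card_Un_disjoint Un_assoc)
    define S' where "S' = I' \<inter> X"
    have S'c: "S' \<in> cand" unfolding cand_def S'_def using indep_subset[OF I'(2)] by auto
    have sub: "I' - X \<subseteq> W - nbh V E S'"
    proof
      fix y assume y: "y \<in> I' - X"
      have "y \<in> W" using y I' unfolding W_def by auto
      moreover have "y \<notin> nbh V E S'"
      proof
        assume "y \<in> nbh V E S'"
        then obtain x where "x \<in> S'" "E x y" unfolding nbh_def by auto
        thus False using y I'(2) unfolding S'_def indep_def by auto
      qed
      ultimately show "y \<in> W - nbh V E S'" by auto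
    qed
    have "card (I' - X) \<le> alpha E (W - nbh V E S')"
      using alpha_ge[OF _ sub indep_subset[OF I'(2)]] fW by auto
    moreover have fI': "finite I'" using I' fV finite_subset by blast
    moreover have "card I' = card S' + card (I' - X)"
      unfolding S'_def using card_Int_Diff[OF fI', of X] by simp
    ultimately have "card I' \<le> g S'" unfolding g_def by linarith
    moreover have "g S' \<le> g S" using gmax S'c S by auto
    ultimately have "card I' + alpha E P \<le> card I" using cI J(3) K(3) key unfolding g_def by linarith
    hence "int (card I) \<ge> k" using I'(3) by linarith
    thus "\<exists>I. I \<subseteq> V \<and> indep E I \<and> int (card I) \<ge> k" using IV iI by blast
  qed
qed


end
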